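(* Let $\ell\ge2$, $0<\mu<L$, data points $\mathbf{x}_i\in\mathbb{R}^n$, and measurements $y_i\in\mathbb{R}$, $\mathbf{z}_i\in\mathbb{R}^n$ for $i\in\{1,\dots,\ell\}$; let $\mathcal{V}=\{(i,j):1\le i<j\le\ell\}$. For each $e=(i,j)\in\mathcal{V}$ introduce copies $\varphi_{i,e},\varphi_{j,e}\in\mathbb{R}$, $\boldsymbol{\delta}_{i,e},\boldsymbol{\delta}_{j,e}\in\mathbb{R}^n$, and let $(C_e)$ denote the two constraints $$\varphi_{i,e}-\varphi_{j,e}-\boldsymbol{\delta}_{j,e}^\top(\mathbf{x}_i-\mathbf{x}_j)\ge\frac{1}{2(1-\mu/L)}\Big(\frac1L\|\boldsymbol{\delta}_{i,e}-\boldsymbol{\delta}_{j,e}\|^2+\mu\|\mathbf{x}_i-\mathbf{x}_j\|^2-2\frac{\mu}{L}(\boldsymbol{\delta}_{j,e}-\boldsymbol{\delta}_{i,e})^\top(\mathbf{x}_j-\mathbf{x}_i)\Big),$$ $$\varphi_{j,e}-\varphi_{i,e}-\boldsymbol{\delta}_{i,e}^\top(\mathbf{x}_j-\mathbf{x}_i)\ge\frac{1}{2(1-\mu/L)}\Big(\frac1L\|\boldsymbol{\delta}_{i,e}-\boldsymbol{\delta}_{j,e}\|^2+\mu\|\mathbf{x}_i-\mathbf{x}_j\|^2-2\frac{\mu}{L}(\boldsymbol{\delta}_{i,e}-\boldsymbol{\delta}_{j,e})^\top(\mathbf{x}_j-\mathbf{x}_i)\Big).$$ Consider the problem $$\min\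 \frac{1}{2(\ell-1)}\sum_{e=(i,j)\in\mathcal{V}}\left\|\begin{bmatrix}\varphi_{i,e}\\ \varphi_{j,e}\end{bmatrix}-\begin{bmatrix}y_i\\ y_j\end{bmatrix}\right\|^2+\left\|\begin{bmatrix}\boldsymbol{\delta}_{i,e}\\ \boldsymbol{\delta}_{j,e}\end{bmatrix}-\begin{bmatrix}\mathbf{z}_i\\ \mathbf{z}_j\end{bmatrix}\right\|^2$$ subject to $(C_e)$ for all $e\in\mathcal{V}$ and the consensus constraints $(\varphi_{i,e},\boldsymbol{\delta}_{i,e})=(\varphi_{i,e'},\boldsymbol{\delta}_{i,e'})$ for all $e,e'$ both involving index $i$. Then this problem can be solved by Peaceman–Rachford splitting with penalty $\rho>0$ (splitting into the objective plus the indicators of the constraints $(C_e)$, and the indicator of the consensus constraints), which yields the iteration: for $h\in\mathbb{N}$ and every $e=(i,j)\in\mathcal{V}$, with $\mathbf{t}_e=(\varphi_{i,e},\varphi_{j,e},\boldsymbol{\delta}_{i,e},\boldsymbol{\delta}_{j,e})\in\mathbb{R}^{2(n+1)}$ and $\mathbf{t}_{m,e}=(\varphi_{m,e},\boldsymbol{\delta}_{m,e})$ for $m\in\{i,j\}$, $$\mathbf{t}_e^h=\operatorname*{argmin}_{\mathbf{t}_e\in\mathbb{R}^{2(n+1)}}\left\{\frac{1}{2(\ell-1)}\left\|\mathbf{t}_e-(y_i,y_j,\mathbf{z}_i,\mathbf{z}_j)\right\|^2+\frac{1}{2\rho}\|\mathbf{t}_e-\mathbf{s}_e^h\|^2\right\}\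 \text{s.t. } (C_e),$$ $$\mathbf{v}_{i,e}^h=\frac{1}{\ell-1}\sum_{e'\,:\,i\sim e'}\left(2\mathbf{t}_{i,e'}^h-\mathbf{s}_{e',i}^h\right),\qquad \mathbf{s}_{e,m}^{h+1}=\mathbf{s}_{e,m}^h+\mathbf{v}_{m,e}^h-\mathbf{t}_{m,e}^h\ \ (m\in\{i,j\}),$$ where $\mathbf{s}_e^h\in\mathbb{R}^{2(n+1)}$ is the PRS auxiliary variable and $\mathbf{s}_{e,m}^h$ its components corresponding to index $m$. In particular, each iteration solves in parallel $\ell(\ell-1)/2$ convex QCQPs, each in $2(n+1)$ variables with $2$ constraints, and then aggregates the results.
   Context: The Peaceman–Rachford splitting for $\min\psi+\chi$ with penalty $\rho>0$ is $\boldsymbol{\xi}^h=\operatorname{prox}_{\rho\psi}(\mathbf{s}^h)$, $\mathbf{v}^h=\operatorname{prox}_{\rho\chi}(2\boldsymbol{\xi}^h-\mathbf{s}^h)$, $\mathbf{s}^{h+1}=\mathbf{s}^h+\mathbf{v}^h-\boldsymbol{\xi}^h$, with $\operatorname{prox}_{\alpha g}(\mathbf{y})=\operatorname{argmin}_{\mathbf{x}}\{g(\mathbf{x})+\|\mathbf{x}-\mathbf{y}\|^2/(2\alpha)\}$. $i\sim e'$ means the pair $e'$ involves index $i$. The problem is a per-pair-copy reformulation of smooth strongly convex regression: estimating function values $\varphi_i$ and gradients $\boldsymbol{\delta}_i$ of a $\mu$-strongly convex, $L$-smooth function from noisy measurements $y_i,\mathbf{z}_i$. *)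

theory Defs
  imports "HOL-Analysis.Analysis"
begin

text \<open>Indices are 0-based: 0..l-1 stands for 1..l.
  The full PRS variable assigns to each pair e and each index m of e the copy
  (phi_{m,e}, delta_{m,e}) :: real \<times> real^'n; values at non-slots are forced to 0.\<close>

type_synonym 'n var = "nat \<times> nat \<Rightarrow> nat \<Rightarrow> real \<times> (real ^ 'n)"

definition pairs :: "nat \<Rightarrow> (nat \<times> nat) set" where
  "pairs l = {(i, j). i < j \<and> j < l}"

definition slots :: "nat \<Rightarrow> ((nat \<times> nat) \<times> nat) set" where
  "slots l = {(e, m). e \<in> pairs l \<and> (m = fst e \<or> m = snd e)}"

definition space :: "nat \<Rightarrow> ('n::finite) var set" where
  "space l = {t. \<forall>e m. (e, m) \<notin> slots l \<longrightarrow> t e m = 0}"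

definition sqn :: "nat \<Rightarrow> ('n::finite) var \<Rightarrow> real" where
  "sqn l t = (\<Sum>(e, m)\<in>slots l. (norm (t e m))\<^sup>2)"

definition vdiff :: "('n::finite) var \<Rightarrow> ('n::finite) var \<Rightarrow> ('n::finite) var" where
  "vdiff a b = (\<lambda>e m. a e m - b e m)"

definition constrC :: "real \<Rightarrow> real \<Rightarrow> real ^ 'n \<Rightarrow> real ^ 'n
    \<Rightarrow> real \<times> (real ^ 'n) \<Rightarrow> real \<times> (real ^ 'n) \<Rightarrow> bool" where
  "constrC \<mu> L xi xj ti tj =
    (let \<phi>i = fst ti; \<delta>i = snd ti; \<phi>j = fst tj; \<delta>j = snd tj in
     \<phi>i - \<phi>j - inner \<delta>j (xi - xj) \<ge> 1 / (2 * (1 - \<mu> / L)) *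
        ((1 / L) * (norm (\<delta>i - \<delta>j))\<^sup>2 + \<mu> * (norm (xi - xj))\<^sup>2
         - 2 * (\<mu> / L) * inner (\<delta>j - \<delta>i) (xj - xi))
   \<and> \<phi>j - \<phi>i - inner \<delta>i (xj - xi) \<ge> 1 / (2 * (1 - \<mu> / L)) *
        ((1 / L) * (norm (\<delta>i - \<delta>j))\<^sup>2 + \<mu> * (norm (xi - xj))\<^sup>2
         - 2 * (\<mu> / L) * inner (\<delta>i - \<delta>j) (xj - xi)))"

definition constr_all :: "nat \<Rightarrow> real \<Rightarrow> real \<Rightarrow> (nat \<Rightarrow> real ^ 'n) \<Rightarrow> ('n::finite) var \<Rightarrow> bool" where
  "constr_all l \<mu> L x t =
     (\<forall>(i, j)\<in>pairs l. constrC \<mu> L (x i) (x j) (t (i, j) i) (t (i, j) j))"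

definition consensus :: "nat \<Rightarrow> ('n::finite) var \<Rightarrow> bool" where
  "consensus l t = (\<forall>i e e'. (e, i) \<in> slots l \<and> (e', i) \<in> slots l \<longrightarrow> t e i = t e' i)"

definition objective :: "nat \<Rightarrow> (nat \<Rightarrow> real) \<Rightarrow> (nat \<Rightarrow> real ^ 'n) \<Rightarrow> ('n::finite) var \<Rightarrow> real" where
  "objective l y z t = 1 / (2 * (real l - 1)) *
     (\<Sum>(e, m)\<in>slots l. (norm (t e m - (y m, z m)))\<^sup>2)"

text \<open>p is a value of prox_{\<alpha>(g + indicator K)}(w) on the variable space:
  a minimiser of g t + ||t - w||^2/(2\<alpha>) over t in the space satisfying K.\<close>
definition is_prox :: "nat \<Rightarrow> (('n::finite) var \<Rightarrow> bool) \<Rightarrow> (('n::finite) var \<Rightarrow> real) \<Rightarrow> real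
    \<Rightarrow> ('n::finite) var \<Rightarrow> ('n::finite) var \<Rightarrow> bool" where
  "is_prox l K g \<alpha> w p =
     (p \<in> space l \<and> K p \<and>
      (\<forall>t\<in>space l. K t \<longrightarrow>
         g p + sqn l (vdiff p w) / (2 * \<alpha>) \<le> g t + sqn l (vdiff t w) / (2 * \<alpha>)))"

definition edge_argmin :: "real \<Rightarrow> real \<Rightarrow> real \<Rightarrow> nat \<Rightarrow> (nat \<Rightarrow> real ^ 'n)
    \<Rightarrow> (nat \<Rightarrow> real) \<Rightarrow> (nat \<Rightarrow> real ^ 'n) \<Rightarrow> nat \<Rightarrow> nat
    \<Rightarrow> real \<times> (real ^ 'n) \<Rightarrow> real \<times> (real ^ 'n)
    \<Rightarrow> real \<times> (real ^ 'n) \<Rightarrow> real \<times> (real ^ 'n) \<Rightarrow> bool" where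
  "edge_argmin \<mu> L \<rho> l x y z i j si sj a b =
    (let f = (\<lambda>a b. 1 / (2 * (real l - 1)) *
                ((norm (a - (y i, z i)))\<^sup>2 + (norm (b - (y j, z j)))\<^sup>2)
              + 1 / (2 * \<rho>) * ((norm (a - si))\<^sup>2 + (norm (b - sj))\<^sup>2))
     in constrC \<mu> L (x i) (x j) a b \<and>
        (\<forall>a' b'. constrC \<mu> L (x i) (x j) a' b' \<longrightarrow> f a b \<le> f a' b'))"

end

theory Submission
  imports Defs
begin


lemma finite_pairs: "finite (pairs l)"
proof -
  have "pairs l \<subseteq> {..<l} \<times> {..<l}" by (auto simp: pairs_def)
  thus ?thesis by (rule finite_subset) auto
qed

lemma finite_slots: "finite (slots l)"
proof -
  have "slots l \<subseteq> pairs l \<times> {..<l}" by (auto simp: slots_def pairs_def)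
  thus ?thesis by (rule finite_subset) (auto simp: finite_pairs)
qed

lemma slots_sum: "(\<Sum>(e, m)\<in>slots l. F e m) = (\<Sum>e\<in>pairs l. F e (fst e) + F e (snd e))"
proof -
  have S: "slots l = (\<lambda>e. (e, fst e)) ` pairs l \<union> (\<lambda>e. (e, snd e)) ` pairs l"
    by (auto simp: slots_def)
  have D: "(\<lambda>e. (e, fst e)) ` pairs l \<inter> (\<lambda>e. (e, snd e)) ` pairs l = {}"
    by (auto simp: pairs_def)
  have "(\<Sum>(e, m)\<in>slots l. F e m) = (\<Sum>x\<in>(\<lambda>e. (e, fst e)) ` pairs l. case x of (e, m) \<Rightarrow> F e m)
      + (\<Sum>x\<in>(\<lambda>e. (e, snd e)) ` pairs l. case x of (e, m) \<Rightarrow> F e m)"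
    unfolding S by (rule sum.union_disjoint) (auto simp: finite_pairs D)
  also have "\<dots> = (\<Sum>e\<in>pairs l. F e (fst e)) + (\<Sum>e\<in>pairs l. F e (snd e))"
    by (subst sum.reindex, simp add: inj_on_def, subst sum.reindex, simp add: inj_on_def, simp)
  finally show ?thesis by (simp add: sum.distrib)
qed

lemma card_pairs: "card (pairs l) = l * (l - 1) div 2"
proof (induction l)
  case 0
  then show ?case by (simp add: pairs_def)
next
  case (Suc l)
  have E: "pairs (Suc l) = pairs l \<union> (\<lambda>i. (i, l)) ` {..<l}"
    by (auto simp: pairs_def)
  have "card (pairs (Suc l)) = card (pairs l) + card ((\<lambda>i. (i, l)) ` {..<l})"
    unfolding E by (rule card_Un_disjoint) (auto simp: finite_pairs, auto simp: pairs_def)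
  also have "\<dots> = l * (l - 1) div 2 + l" by (simp add: Suc card_image inj_on_def)
  also have "\<dots> = Suc l * (Suc l - 1) div 2"
    by (cases l) (auto simp: algebra_simps)
  finally show ?case .
qed

definition EF :: "real \<Rightarrow> nat \<Rightarrow> (nat \<Rightarrow> real) \<Rightarrow> (nat \<Rightarrow> real ^ 'n) \<Rightarrow> ('n::finite) var
   \<Rightarrow> nat \<Rightarrow> nat \<Rightarrow> real \<times> (real ^ 'n) \<Rightarrow> real \<times> (real ^ 'n) \<Rightarrow> real" where
  "EF \<rho> l y z w i j a b = 1 / (2 * (real l - 1)) *
                ((norm (a - (y i, z i)))\<^sup>2 + (norm (b - (y j, z j)))\<^sup>2)
              + 1 / (2 * \<rho>) * ((norm (a - w (i, j) i))\<^sup>2 + (norm (b - w (i, j) j))\<^sup>2)"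

lemma edge_argmin_alt:
  "edge_argmin \<mu> L \<rho> l x y z i j (w (i, j) i) (w (i, j) j) a b \<longleftrightarrow>
   constrC \<mu> L (x i) (x j) a b \<and>
   (\<forall>a' b'. constrC \<mu> L (x i) (x j) a' b' \<longrightarrow> EF \<rho> l y z w i j a b \<le> EF \<rho> l y z w i j a' b')"
  by (simp add: edge_argmin_def EF_def Let_def)

lemma Phi_sum:
  "objective l y z t + sqn l (vdiff t w) / (2 * \<rho>) =
   (\<Sum>e\<in>pairs l. EF \<rho> l y z w (fst e) (snd e) (t e (fst e)) (t e (snd e)))"
proof -
  have 1: "objective l y z t = 1 / (2 * (real l - 1)) *
     (\<Sum>e\<in>pairs l. (norm (t e (fst e) - (y (fst e), z (fst e))))\<^sup>2 + (norm (t e (snd e) - (y (snd e), z (snd e))))\<^sup>2)"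
    unfolding objective_def by (subst slots_sum) simp
  have 2: "sqn l (vdiff t w) = 
     (\<Sum>e\<in>pairs l. (norm (t e (fst e) - w e (fst e)))\<^sup>2 + (norm (t e (snd e) - w e (snd e)))\<^sup>2)"
    unfolding sqn_def vdiff_def by (subst slots_sum) simp
  show ?thesis unfolding 1 2 EF_def sum.distrib sum_distrib_left
    by (simp add: add_divide_distrib sum_divide_distrib sum.distrib split_beta)
qed


lemma prox1:
  fixes w p :: "('n::finite) var"
  shows "is_prox l (constr_all l \<mu> L x) (objective l y z) \<rho> w p \<longleftrightarrow>
    p \<in> space l \<and> (\<forall>(i, j)\<in>pairs l.
       edge_argmin \<mu> L \<rho> l x y z i j (w (i, j) i) (w (i, j) j) (p (i, j) i) (p (i, j) j))"
proof
  assume H: "is_prox l (constr_all l \<mu> L x) (objective l y z) \<rho> w p"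
  hence sp: "p \<in> space l" and cp: "constr_all l \<mu> L x p"
    and mn: "\<And>t. t \<in> space l \<Longrightarrow> constr_all l \<mu> L x t \<Longrightarrow>
        objective l y z p + sqn l (vdiff p w) / (2 * \<rho>) \<le> objective l y z t + sqn l (vdiff t w) / (2 * \<rho>)"
    by (auto simp: is_prox_def)
  have "edge_argmin \<mu> L \<rho> l x y z i j (w (i, j) i) (w (i, j) j) (p (i, j) i) (p (i, j) j)"
    if ij: "(i, j) \<in> pairs l" for i j
  proof -
    have ne: "i \<noteq> j" using ij by (auto simp: pairs_def)
    have c1: "constrC \<mu> L (x i) (x j) (p (i, j) i) (p (i, j) j)"
      using cp ij by (auto simp: constr_all_def)
    have "EF \<rho> l y z w i j (p (i, j) i) (p (i, j) j) \<le> EF \<rho> l y z w i j a' b'"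
      if ca: "constrC \<mu> L (x i) (x j) a' b'" for a' b'
    proof -
      define t where "t = p((i, j) := (p (i, j))(i := a', j := b'))"
      have ti: "t (i, j) i = a'" "t (i, j) j = b'" using ne by (auto simp: t_def)
      have tsp: "t \<in> space l"
        using sp by (auto simp: space_def t_def slots_def ij)
      have tc: "constr_all l \<mu> L x t"
        using cp ca ti by (auto simp: constr_all_def t_def)
      define G where "G = (\<lambda>q::'n var. \<lambda>e. EF \<rho> l y z w (fst e) (snd e) (q e (fst e)) (q e (snd e)))"
      have eq: "sum (G t) (pairs l - {(i, j)}) = sum (G p) (pairs l - {(i, j)})"
        by (rule sum.cong) (auto simp: G_def t_def)
      have "sum (G p) (pairs l) \<le> sum (G t) (pairs l)"
        using mn[OF tsp tc] unfolding Phi_sum G_def .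
      hence "G p (i, j) \<le> G t (i, j)"
        using eq ij by (simp add: sum.remove[OF finite_pairs])
      thus ?thesis using ti by (simp add: G_def)
    qed
    thus ?thesis using c1 by (simp add: edge_argmin_alt)
  qed
  thus "p \<in> space l \<and> (\<forall>(i, j)\<in>pairs l.
       edge_argmin \<mu> L \<rho> l x y z i j (w (i, j) i) (w (i, j) j) (p (i, j) i) (p (i, j) j))"
    using sp by auto
next
  assume H: "p \<in> space l \<and> (\<forall>(i, j)\<in>pairs l.
       edge_argmin \<mu> L \<rho> l x y z i j (w (i, j) i) (w (i, j) j) (p (i, j) i) (p (i, j) j))"
  hence E: "\<And>i j. (i, j) \<in> pairs l \<Longrightarrow> constrC \<mu> L (x i) (x j) (p (i, j) i) (p (i, j) j) \<and>
      (\<forall>a' b'. constrC \<mu> L (x i) (x j) a' b' \<longrightarrow> EF \<rho> l y z w i j (p (i, j) i) (p (i, j) j) \<le> EF \<rho> l y z w i j a' b')"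
    by (auto simp: edge_argmin_alt)
  have cp: "constr_all l \<mu> L x p" using E by (auto simp: constr_all_def)
  have "objective l y z p + sqn l (vdiff p w) / (2 * \<rho>) \<le> objective l y z t + sqn l (vdiff t w) / (2 * \<rho>)"
    if "t \<in> space l" "constr_all l \<mu> L x t" for t
    unfolding Phi_sum
  proof (rule sum_mono)
    fix e assume e: "e \<in> pairs l"
    obtain i j where ij: "e = (i, j)" by (cases e)
    have "constrC \<mu> L (x i) (x j) (t (i, j) i) (t (i, j) j)"
      using that(2) e ij by (auto simp: constr_all_def)
    hence "EF \<rho> l y z w i j (p (i, j) i) (p (i, j) j) \<le> EF \<rho> l y z w i j (t (i, j) i) (t (i, j) j)"
      using E[of i j] e ij by blast
    thus "EF \<rho> l y z w (fst e) (snd e) (p e (fst e)) (p e (snd e))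
         \<le> EF \<rho> l y z w (fst e) (snd e) (t e (fst e)) (t e (snd e))"
      using E[of i j] e ij by auto
  qed
  thus "is_prox l (constr_all l \<mu> L x) (objective l y z) \<rho> w p"
    using H cp by (auto simp: is_prox_def)
qed


definition inc :: "nat \<Rightarrow> nat \<Rightarrow> (nat \<times> nat) set" where
  "inc l i = {e' \<in> pairs l. i = fst e' \<or> i = snd e'}"

lemma card_inc: assumes "m < l" shows "card (inc l m) = l - 1"
proof -
  have E: "inc l m = (\<lambda>i. (i, m)) ` {..<m} \<union> (\<lambda>j. (m, j)) ` {m<..<l}"
    using assms by (auto simp: inc_def pairs_def)
  have "card (inc l m) = card ((\<lambda>i. (i, m)) ` {..<m}) + card ((\<lambda>j. (m, j)) ` {m<..<l})"
    unfolding E by (rule card_Un_disjoint) auto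
  also have "\<dots> = m + (l - Suc m)" by (simp add: card_image inj_on_def)
  finally show ?thesis using assms by simp
qed

lemma finite_inc: "finite (inc l m)"
  using finite_pairs by (simp add: inc_def)

lemma slot_inc: "(e, m) \<in> slots l \<longleftrightarrow> e \<in> inc l m"
  by (auto simp: slots_def inc_def)

lemma prox2:
  fixes w v :: "('n::finite) var"
  assumes l2: "l \<ge> 2" and rho: "\<rho> > 0"
  shows "is_prox l (consensus l) (\<lambda>_. 0) \<rho> w v \<longleftrightarrow>
    v \<in> space l \<and> (\<forall>(e, i)\<in>slots l. v e i = (1 / (real l - 1)) *\<^sub>R (\<Sum>e'\<in>inc l i. w e' i))"
proof -
  define A where "A i = (1 / (real l - 1)) *\<^sub>R (\<Sum>e'\<in>inc l i. w e' i)" for i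
  define a :: "'n var" where "a e m = (if (e, m) \<in> slots l then A m else 0)" for e m
  have asp: "a \<in> space l" by (auto simp: a_def space_def)
  have acons: "consensus l a" by (auto simp: a_def consensus_def)
  have RHS: "(v \<in> space l \<and> (\<forall>(e, i)\<in>slots l. v e i = A i)) \<longleftrightarrow> v = a"
    by (auto simp: a_def space_def fun_eq_iff)
  have sq: "(norm (p + q))\<^sup>2 = (norm p)\<^sup>2 + (norm q)\<^sup>2 + 2 * inner p q" for p q :: "real \<times> (real ^ 'n)"
    using dot_norm[of p q] by simp
  have sq2: "(norm (p - r))\<^sup>2 = (norm (q - r))\<^sup>2 + (norm (p - q))\<^sup>2 + 2 * inner (p - q) (q - r)"
    for p q r :: "real \<times> (real ^ 'n)"
    using sq[of "p - q" "q - r"] by (simp add: algebra_simps)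
  have cross: "(\<Sum>(e, m)\<in>slots l. inner (t e m - a e m) (a e m - w e m)) = 0"
    if tc: "consensus l t" for t :: "'n var"
  proof -
    let ?g = "\<lambda>x. inner (t (fst x) (snd x) - a (fst x) (snd x)) (a (fst x) (snd x) - w (fst x) (snd x))"
    have "(\<Sum>(e, m)\<in>slots l. inner (t e m - a e m) (a e m - w e m)) = sum ?g (slots l)"
      by (simp add: split_beta)
    also have "\<dots> = (\<Sum>m\<in>{..<l}. sum ?g {x \<in> slots l. snd x = m})"
      by (rule sum.group[symmetric]) (simp add: finite_slots, simp, auto simp: slots_def pairs_def)
    also have "\<dots> = 0"
    proof (rule sum.neutral, rule ballI)
      fix m assume m: "m \<in> {..<l}"
      have Sm: "{x \<in> slots l. snd x = m} = (\<lambda>e. (e, m)) ` inc l m"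
        by (auto simp: slot_inc)
      have "sum ?g {x \<in> slots l. snd x = m} = (\<Sum>e\<in>inc l m. inner (t e m - a e m) (a e m - w e m))"
        unfolding Sm by (subst sum.reindex) (auto simp: inj_on_def)
      also have "\<dots> = 0"
      proof (cases "inc l m = {}")
        case True thus ?thesis by simp
      next
        case False
        then obtain e0 where e0: "e0 \<in> inc l m" by auto
        have "(\<Sum>e\<in>inc l m. inner (t e m - a e m) (a e m - w e m))
            = (\<Sum>e\<in>inc l m. inner (t e0 m - A m) (A m - w e m))"
        proof (rule sum.cong)
          fix e assume e: "e \<in> inc l m"
          have "t e m = t e0 m" using tc e e0 unfolding consensus_def slot_inc by blast
          thus "inner (t e m - a e m) (a e m - w e m) = inner (t e0 m - A m) (A m - w e m)"
            using e by (simp add: a_def slot_inc)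
        qed simp
        also have "\<dots> = inner (t e0 m - A m) (\<Sum>e\<in>inc l m. A m - w e m)"
          by (simp add: inner_sum_right)
        also have "(\<Sum>e\<in>inc l m. A m - w e m) = 0"
        proof -
          have "(\<Sum>e\<in>inc l m. A m - w e m) = real (card (inc l m)) *\<^sub>R A m - (\<Sum>e\<in>inc l m. w e m)"
            by (simp add: sum_subtractf sum_constant_scaleR)
          also have "real (card (inc l m)) = real l - 1" using l2 card_inc[of m l] m by (simp add: of_nat_diff)
          also have "(real l - 1) *\<^sub>R A m = (\<Sum>e\<in>inc l m. w e m)"
            using l2 by (simp add: A_def)
          finally show ?thesis by simp
        qed
        finally show ?thesis by simp
      qed
      finally show "sum ?g {x \<in> slots l. snd x = m} = 0" .
    qed
    finally show ?thesis .
  qed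
  have key: "sqn l (vdiff t w) = sqn l (vdiff a w) + sqn l (vdiff t a)"
    if tc: "consensus l t" for t :: "'n var"
  proof -
    have "sqn l (vdiff t w) = (\<Sum>(e, m)\<in>slots l. (norm (t e m - w e m))\<^sup>2)"
      by (simp add: sqn_def vdiff_def)
    also have "\<dots> = (\<Sum>(e, m)\<in>slots l. (norm (a e m - w e m))\<^sup>2 + (norm (t e m - a e m))\<^sup>2
          + 2 * inner (t e m - a e m) (a e m - w e m))"
      by (rule sum.cong[OF refl]) (clarsimp, rule sq2)
    also have "\<dots> = sqn l (vdiff a w) + sqn l (vdiff t a)
          + 2 * (\<Sum>(e, m)\<in>slots l. inner (t e m - a e m) (a e m - w e m))"
      by (simp add: sqn_def vdiff_def sum.distrib sum_distrib_left split_beta)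
    finally show ?thesis using cross[OF tc] by simp
  qed
  have nn: "sqn l q \<ge> 0" for q :: "'n var"
    unfolding sqn_def by (rule sum_nonneg) auto
  have "is_prox l (consensus l) (\<lambda>_. 0) \<rho> w v \<longleftrightarrow> v = a"
  proof
    assume H: "is_prox l (consensus l) (\<lambda>_. 0) \<rho> w v"
    hence vs: "v \<in> space l" and vc: "consensus l v"
      and le: "sqn l (vdiff v w) / (2 * \<rho>) \<le> sqn l (vdiff a w) / (2 * \<rho>)"
      using asp acons by (auto simp: is_prox_def)
    have "sqn l (vdiff v w) \<le> sqn l (vdiff a w)"
      using le rho by (simp add: divide_right_mono_neg field_simps)
    hence "sqn l (vdiff v a) \<le> 0" using key[OF vc] by simp
    hence z: "sqn l (vdiff v a) = 0" using nn[of "vdiff v a"] by simp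
    have "\<forall>x\<in>slots l. (case x of (e, m) \<Rightarrow> (norm (vdiff v a e m))\<^sup>2) = 0"
      using z unfolding sqn_def
      by (subst (asm) sum_nonneg_eq_0_iff) (auto simp: finite_slots)
    hence S: "\<And>e m. (e, m) \<in> slots l \<Longrightarrow> v e m = a e m" by (fastforce simp: vdiff_def)
    show "v = a"
    proof (intro ext)
      fix e m
      have V: "\<forall>e m. (e, m) \<notin> slots l \<longrightarrow> v e m = 0" using vs by (simp only: space_def mem_Collect_eq)
      have AA: "\<forall>e m. (e, m) \<notin> slots l \<longrightarrow> a e m = 0" using asp by (simp only: space_def mem_Collect_eq)
      show "v e m = a e m"
      proof (cases "(e, m) \<in> slots l")
        case True thus ?thesis by (rule S)
      next
        case False
        have "v e m = 0" using V False by blast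
        moreover have "a e m = 0" using AA False by blast
        ultimately show ?thesis by simp
      qed
    qed
  next
    assume "v = a"
    have "sqn l (vdiff a w) / (2 * \<rho>) \<le> sqn l (vdiff t w) / (2 * \<rho>)"
      if "t \<in> space l" "consensus l t" for t
    proof -
      have "sqn l (vdiff a w) \<le> sqn l (vdiff t w)" using key[OF that(2)] nn[of "vdiff t a"] by linarith
      thus ?thesis using rho by (intro divide_right_mono) auto
    qed
    thus "is_prox l (consensus l) (\<lambda>_. 0) \<rho> w v"
      unfolding is_prox_def using asp acons \<open>v = a\<close> by simp
  qed
  moreover have "(v \<in> space l \<and> (\<forall>(e, i)\<in>slots l. v e i = (1 / (real l - 1)) *\<^sub>R (\<Sum>e'\<in>inc l i. w e' i))) \<longleftrightarrow> v = a"
    using RHS by (simp only: A_def)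
  ultimately show ?thesis by blast
qed


theorem lemma4:
  fixes l :: nat and \<mu> L \<rho> :: real
    and x z :: "nat \<Rightarrow> real ^ 'n" and y :: "nat \<Rightarrow> real"
    and s \<xi> v :: "nat \<Rightarrow> 'n var"
  assumes "l \<ge> 2" and "0 < \<mu>" and "\<mu> < L" and "0 < \<rho>"
  shows "((\<forall>h. is_prox l (constr_all l \<mu> L x) (objective l y z) \<rho> (s h) (\<xi> h)
            \<and> is_prox l (consensus l) (\<lambda>_. 0) \<rho> (\<lambda>e m. 2 *\<^sub>R \<xi> h e m - s h e m) (v h)
            \<and> s (Suc h) = (\<lambda>e m. s h e m + v h e m - \<xi> h e m))
     \<longleftrightarrow>
         (\<forall>h. \<xi> h \<in> space l
            \<and> (\<forall>(i, j)\<in>pairs l.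
                 edge_argmin \<mu> L \<rho> l x y z i j (s h (i, j) i) (s h (i, j) j)
                   (\<xi> h (i, j) i) (\<xi> h (i, j) j))
            \<and> v h \<in> space l
            \<and> (\<forall>(e, i)\<in>slots l.
                 v h e i = (1 / (real l - 1)) *\<^sub>R
                   (\<Sum>e'\<in>{e' \<in> pairs l. i = fst e' \<or> i = snd e'}.
                      2 *\<^sub>R \<xi> h e' i - s h e' i))
            \<and> s (Suc h) = (\<lambda>e m. s h e m + v h e m - \<xi> h e m)))
     \<and> card (pairs l) = l * (l - 1) div 2"
  proof -
  have P1: "\<And>h. is_prox l (constr_all l \<mu> L x) (objective l y z) \<rho> (s h) (\<xi> h) \<longleftrightarrow>
    \<xi> h \<in> space l \<and> (\<forall>(i, j)\<in>pairs l.
       edge_argmin \<mu> L \<rho> l x y z i j (s h (i, j) i) (s h (i, j) j) (\<xi> h (i, j) i) (\<xi> h (i, j) j))"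
    by (rule prox1)
  have P2: "\<And>h. is_prox l (consensus l) (\<lambda>_. 0) \<rho> (\<lambda>e m. 2 *\<^sub>R \<xi> h e m - s h e m) (v h) \<longleftrightarrow>
    v h \<in> space l \<and> (\<forall>(e, i)\<in>slots l.
                 v h e i = (1 / (real l - 1)) *\<^sub>R
                   (\<Sum>e'\<in>{e' \<in> pairs l. i = fst e' \<or> i = snd e'}.
                      2 *\<^sub>R \<xi> h e' i - s h e' i))"
    using prox2[OF assms(1) assms(4)] unfolding inc_def .
  show ?thesis by (simp only: P1 P2 card_pairs conj_assoc simp_thms)
qed

end
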